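(* Let $G$ be a finite graph with no isolated vertices such that there is no nontrivial circuit injection $f:G_M\rightarrow B$ with $B$ a binary matroid. Then $G$ is 2-connected.
   Context: Graphs are undirected without loops or multiple edges. $G_M$ is the cycle matroid of $G$ (cells: edges; circuits: edge sets of cycles of $G$). A matroid is a pair $(S,\mathscr{C})$, $S\neq\emptyset$, $\mathscr{C}\subseteq 2^S$, satisfying: (I) $A,B\in\mathscr{C}$, $A\subseteq B$ implies $A=B$; (II) $A,B\in\mathscr{C}$, $a\in A\cap B$, $b\in (A\cup B)\setminus(A\cap B)$ implies there exists $D\in\mathscr{C}$ with $D\subseteq A\cup B$, $a\notin D$, $b\in D$. A matroid is binary if the symmetric difference of any two circuits is a union of pairwise disjoint circuits. A circuit injection $f:G_M\rightarrow B$ is a bijection from $E(G)$ onto the cells of $B$ sending each circuit of $G$ to a circuit of $B$; it is nontrivial if $B$ has a circuit not equal to the image of any circuit of $G$. *)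

theory Defs
  imports Main
begin

definition simple_graph :: "'v set \<Rightarrow> 'v set set \<Rightarrow> bool" where
  "simple_graph V E \<longleftrightarrow> finite V \<and> V \<noteq> {} \<and>
     (\<forall>e\<in>E. \<exists>u v. u \<in> V \<and> v \<in> V \<and> u \<noteq> v \<and> e = {u, v})"

definition no_isolated_vertices :: "'v set \<Rightarrow> 'v set set \<Rightarrow> bool" where
  "no_isolated_vertices V E \<longleftrightarrow> (\<forall>v\<in>V. \<exists>e\<in>E. v \<in> e)"

definition cycle_edges :: "'v set \<Rightarrow> 'v set set \<Rightarrow> 'v set set \<Rightarrow> bool" where
  "cycle_edges V E C \<longleftrightarrow> (\<exists>vs. length vs \<ge> 3 \<and> distinct vs \<and> set vs \<subseteq> V \<and>
     (\<forall>i < length vs. {vs ! i, vs ! ((i + 1) mod length vs)} \<in> E) \<and>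
     C = {{vs ! i, vs ! ((i + 1) mod length vs)} | i. i < length vs})"

definition cycle_matroid_circuits :: "'v set \<Rightarrow> 'v set set \<Rightarrow> 'v set set set" where
  "cycle_matroid_circuits V E = {C. cycle_edges V E C}"

definition matroid :: "'c set \<Rightarrow> 'c set set \<Rightarrow> bool" where
  "matroid S Cs \<longleftrightarrow> S \<noteq> {} \<and> Cs \<subseteq> Pow S \<and>
     (\<forall>A\<in>Cs. \<forall>B\<in>Cs. A \<subseteq> B \<longrightarrow> A = B) \<and>
     (\<forall>A\<in>Cs. \<forall>B\<in>Cs. \<forall>a b. a \<in> A \<inter> B \<longrightarrow> b \<in> (A \<union> B) - (A \<inter> B) \<longrightarrow>
        (\<exists>D\<in>Cs. D \<subseteq> A \<union> B \<and> a \<notin> D \<and> b \<in> D))"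

definition binary_matroid :: "'c set \<Rightarrow> 'c set set \<Rightarrow> bool" where
  "binary_matroid S Cs \<longleftrightarrow> matroid S Cs \<and>
     (\<forall>A\<in>Cs. \<forall>B\<in>Cs. \<exists>\<D>. \<D> \<subseteq> Cs \<and>
        (\<forall>X\<in>\<D>. \<forall>Y\<in>\<D>. X \<noteq> Y \<longrightarrow> X \<inter> Y = {}) \<and>
        \<Union>\<D> = (A - B) \<union> (B - A))"

definition circuit_injection ::
  "'v set \<Rightarrow> 'v set set \<Rightarrow> ('v set \<Rightarrow> 'c) \<Rightarrow> 'c set \<Rightarrow> 'c set set \<Rightarrow> bool" where
  "circuit_injection V E f S Cs \<longleftrightarrow> bij_betw f E S \<and>
     (\<forall>C\<in>cycle_matroid_circuits V E. f ` C \<in> Cs)"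

definition nontrivial_circuit_injection ::
  "'v set \<Rightarrow> 'v set set \<Rightarrow> ('v set \<Rightarrow> 'c) \<Rightarrow> 'c set \<Rightarrow> 'c set set \<Rightarrow> bool" where
  "nontrivial_circuit_injection V E f S Cs \<longleftrightarrow> circuit_injection V E f S Cs \<and>
     (\<exists>D\<in>Cs. \<forall>C\<in>cycle_matroid_circuits V E. D \<noteq> f ` C)"

definition graph_connected :: "'v set \<Rightarrow> 'v set set \<Rightarrow> bool" where
  "graph_connected V E \<longleftrightarrow> V \<noteq> {} \<and>
     (\<forall>u\<in>V. \<forall>v\<in>V. (u, v) \<in> {(x, y). x \<in> V \<and> y \<in> V \<and> {x, y} \<in> E}\<^sup>*)"

definition two_connected :: "'v set \<Rightarrow> 'v set set \<Rightarrow> bool" where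
  "two_connected V E \<longleftrightarrow> card V \<ge> 3 \<and> graph_connected V E \<and>
     (\<forall>x\<in>V. graph_connected (V - {x}) {e\<in>E. x \<notin> e})"

end

theory Submission
  imports Defs
begin

definition circs :: "'a set set \<Rightarrow> 'a set set" where
  "circs W = {C\<in>W. C \<noteq> {} \<and> (\<forall>D\<in>W. D \<subseteq> C \<longrightarrow> D \<noteq> {} \<longrightarrow> D = C)}"

definition sdiff :: "'a set \<Rightarrow> 'a set \<Rightarrow> 'a set" where
  "sdiff A B = (A - B) \<union> (B - A)"

lemma decomp:
  assumes fin: "finite X" and cl: "\<And>A B. A \<in> W \<Longrightarrow> B \<in> W \<Longrightarrow> sdiff A B \<in> W"
    and XW: "X \<in> W"
  shows "\<exists>\<D>. \<D> \<subseteq> circs W \<and> (\<forall>P\<in>\<D>. \<forall>Q\<in>\<D>. P \<noteq> Q \<longrightarrow> P \<inter> Q = {}) \<and> \<Union>\<D> = X"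
  using fin XW
proof (induction "card X" arbitrary: X rule: less_induct)
  case less
  show ?case
  proof (cases "X = {}")
    case True
    then show ?thesis by (intro exI[of _ "{}"]) auto
  next
    case False
    define P where "P = (\<lambda>n. \<exists>Y. Y \<in> W \<and> Y \<noteq> {} \<and> Y \<subseteq> X \<and> card Y = n)"
    have "P (card X)" using less.prems(2) False unfolding P_def by blast
    then obtain n where "P n" and nmin: "\<And>m. m < n \<Longrightarrow> \<not> P m"
      using exists_least_iff[of P] by blast
    then obtain Y where Y: "Y \<in> W" "Y \<noteq> {}" "Y \<subseteq> X" "card Y = n" unfolding P_def by blast
    have finY: "finite Y" using Y(3) less.prems(1) finite_subset by blast
    have Yc: "Y \<in> circs W"
      unfolding circs_def
    proof (intro CollectI conjI ballI impI)
      fix D assume D: "D \<in> W" "D \<subseteq> Y" "D \<noteq> {}"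
      show "D = Y"
      proof (rule ccontr)
        assume "D \<noteq> Y"
        then have "card D < card Y" using D finY by (meson psubsetI psubset_card_mono)
        moreover have "P (card D)" unfolding P_def using D Y by blast
        ultimately show False using nmin Y(4) by blast
      qed
    qed (use Y in auto)
    have "X - Y = sdiff X Y" using Y(3) unfolding sdiff_def by blast
    then have XY: "X - Y \<in> W" using cl[OF less.prems(2) Y(1)] by simp
    have "X - Y \<subset> X" using Y by blast
    then have "card (X - Y) < card X" by (rule psubset_card_mono[OF less.prems(1)])
    from less.hyps[OF this finite_Diff[OF less.prems(1)] XY] obtain \<D> where
      D0: "\<D> \<subseteq> circs W \<and> (\<forall>P\<in>\<D>. \<forall>Q\<in>\<D>. P \<noteq> Q \<longrightarrow> P \<inter> Q = {}) \<and> \<Union>\<D> = X - Y"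
      by (rule exE)
    have D: "\<D> \<subseteq> circs W" "\<forall>P\<in>\<D>. \<forall>Q\<in>\<D>. P \<noteq> Q \<longrightarrow> P \<inter> Q = {}" "\<Union>\<D> = X - Y"
      using D0 by (rule conjunct1, rule conjunct1[OF conjunct2], rule conjunct2[OF conjunct2])
    show ?thesis
    proof (intro exI[of _ "insert Y \<D>"] conjI)
      show "insert Y \<D> \<subseteq> circs W" using D Yc by auto
      show "\<Union> (insert Y \<D>) = X" using D Y by auto
      show "\<forall>P\<in>insert Y \<D>. \<forall>Q\<in>insert Y \<D>. P \<noteq> Q \<longrightarrow> P \<inter> Q = {}"
      proof (intro ballI impI)
        fix P Q assume PQ: "P \<in> insert Y \<D>" "Q \<in> insert Y \<D>" "P \<noteq> Q"
        have sub: "\<And>Z. Z \<in> \<D> \<Longrightarrow> Z \<inter> Y = {}" using D(3) by blast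
        show "P \<inter> Q = {}"
        proof (cases "P = Y")
          case True
          then have "Q \<in> \<D>" using PQ by auto
          then show ?thesis using sub True by blast
        next
          case False
          then have P: "P \<in> \<D>" using PQ by auto
          show ?thesis
          proof (cases "Q = Y")
            case True then show ?thesis using sub P by blast
          next
            case False then have "Q \<in> \<D>" using PQ by auto
            then show ?thesis using D(2) P PQ(3) by blast
          qed
        qed
      qed
    qed
  qed
qed

lemma circs_binary:
  assumes S: "finite S" "S \<noteq> {}" and WS: "W \<subseteq> Pow S"
    and cl: "\<And>A B. A \<in> W \<Longrightarrow> B \<in> W \<Longrightarrow> sdiff A B \<in> W"
  shows "binary_matroid S (circs W)"
proof -
  have dec: "\<exists>\<D>. \<D> \<subseteq> circs W \<and> (\<forall>P\<in>\<D>. \<forall>Q\<in>\<D>. P \<noteq> Q \<longrightarrow> P \<inter> Q = {}) \<and> \<Union>\<D> = sdiff A B"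
    if "A \<in> circs W" "B \<in> circs W" for A B
  proof (rule decomp[OF _ cl])
    have "A \<in> W" "B \<in> W" using that unfolding circs_def by auto
    then have "A \<subseteq> S" "B \<subseteq> S" using WS by auto
    then have "sdiff A B \<subseteq> S" unfolding sdiff_def by blast
    then show "finite (sdiff A B)" using S(1) by (rule finite_subset)
    show "sdiff A B \<in> W" using that cl unfolding circs_def by auto
  qed
  show ?thesis
    unfolding binary_matroid_def matroid_def
  proof (intro conjI ballI allI impI)
    show "S \<noteq> {}" by fact
    show "circs W \<subseteq> Pow S" using WS unfolding circs_def by auto
  next
    fix A B assume A: "A \<in> circs W" and B: "B \<in> circs W" and AB: "A \<subseteq> B"
    have AW: "A \<in> W" "A \<noteq> {}" using A unfolding circs_def by simp_all
    have "\<forall>D\<in>W. D \<subseteq> B \<longrightarrow> D \<noteq> {} \<longrightarrow> D = B" using B unfolding circs_def by simp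
    from this[rule_format, OF AW(1) AB AW(2)] show "A = B" .
  next
    fix A B a b assume AB: "A \<in> circs W" "B \<in> circs W" and a: "a \<in> A \<inter> B"
      and b: "b \<in> A \<union> B - A \<inter> B"
    from dec[OF AB] obtain \<D> where
      D0: "\<D> \<subseteq> circs W \<and> (\<forall>P\<in>\<D>. \<forall>Q\<in>\<D>. P \<noteq> Q \<longrightarrow> P \<inter> Q = {}) \<and> \<Union>\<D> = sdiff A B"
      by (rule exE)
    have D: "\<D> \<subseteq> circs W" "\<Union>\<D> = sdiff A B" using D0 by simp_all
    have "b \<in> sdiff A B" using b unfolding sdiff_def by auto
    then have "b \<in> \<Union>\<D>" using D(2) by simp
    then obtain D where DD: "D \<in> \<D>" "b \<in> D" by (rule UnionE)
    have "D \<subseteq> sdiff A B" using Union_upper[OF DD(1)] D(2) by simp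
    moreover have "a \<notin> sdiff A B" using a unfolding sdiff_def by simp
    moreover have "sdiff A B \<subseteq> A \<union> B" unfolding sdiff_def by auto
    ultimately have "D \<subseteq> A \<union> B" "a \<notin> D" by auto
    moreover have "D \<in> circs W" using DD(1) D(1) by (rule subsetD[rotated])
    ultimately show "\<exists>D\<in>circs W. D \<subseteq> A \<union> B \<and> a \<notin> D \<and> b \<in> D"
      using DD(2) by (intro bexI[of _ D] conjI)
  next
    fix A B assume AB: "A \<in> circs W" "B \<in> circs W"
    from dec[OF AB] obtain \<D> where
      D0: "\<D> \<subseteq> circs W \<and> (\<forall>P\<in>\<D>. \<forall>Q\<in>\<D>. P \<noteq> Q \<longrightarrow> P \<inter> Q = {}) \<and> \<Union>\<D> = sdiff A B"
      by (rule exE)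
    then show "\<exists>\<D>\<subseteq>circs W. (\<forall>X\<in>\<D>. \<forall>Y\<in>\<D>. X \<noteq> Y \<longrightarrow> X \<inter> Y = {}) \<and> \<Union> \<D> = A - B \<union> (B - A)"
      unfolding sdiff_def by (intro exI[of _ \<D>]) simp
  qed
qed

definition dg :: "'v set set \<Rightarrow> 'v \<Rightarrow> nat" where
  "dg X w = card {e\<in>X. w \<in> e}"

lemma dg_sdiff:
  assumes "finite X" "finite Y"
  shows "even (dg (sdiff X Y) w) \<longleftrightarrow> (even (dg X w) \<longleftrightarrow> even (dg Y w))"
proof -
  define A where "A = {e\<in>X. w \<in> e}"
  define B where "B = {e\<in>Y. w \<in> e}"
  have fA: "finite A" "finite B" using assms unfolding A_def B_def by auto
  have eq: "{e\<in>sdiff X Y. w \<in> e} = (A - B) \<union> (B - A)"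
    unfolding A_def B_def sdiff_def by blast
  have c1: "card ((A - B) \<union> (B - A)) = card (A - B) + card (B - A)"
    using fA by (intro card_Un_disjoint) auto
  have c2a: "card (A - B) = card A - card (A \<inter> B)"
    by (rule card_Diff_subset_Int) (use fA in auto)
  have c2b: "card (B - A) = card B - card (B \<inter> A)"
    by (rule card_Diff_subset_Int) (use fA in auto)
  have BA: "B \<inter> A = A \<inter> B" by blast
  have c3: "card (A \<inter> B) \<le> card A" "card (A \<inter> B) \<le> card B"
    using fA by (auto intro: card_mono)
  have d1: "dg (sdiff X Y) w = card (A - B) + card (B - A)" unfolding dg_def eq using c1 .
  have d2: "dg X w = card A" "dg Y w = card B" unfolding dg_def A_def B_def by (rule refl)+
  have "dg (sdiff X Y) w + 2 * card (A \<inter> B) = dg X w + dg Y w"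
    using d1 d2 c2a c2b c3 unfolding BA by linarith
  then have "even (dg (sdiff X Y) w + 2 * card (A \<inter> B)) = even (dg X w + dg Y w)" by (simp only:)
  then show ?thesis by simp
qed

definition ced :: "'v list \<Rightarrow> nat \<Rightarrow> 'v set" where
  "ced vs i = {vs ! i, vs ! ((i + 1) mod length vs)}"

lemma cycle_edges_alt:
  "cycle_edges V E C \<longleftrightarrow> (\<exists>vs. 3 \<le> length vs \<and> distinct vs \<and> set vs \<subseteq> V \<and>
     (\<forall>i<length vs. ced vs i \<in> E) \<and> C = ced vs ` {..<length vs})"
  unfolding cycle_edges_def ced_def setcompr_eq_image lessThan_def by simp

lemma pr_eq:
  fixes n :: nat
  assumes "k < n"
  shows "(k + n - 1) mod n = (if k = 0 then n - 1 else k - 1)"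
proof (cases "k = 0")
  case True
  have "n - 1 < n" using assms by simp
  then show ?thesis using True by simp
next
  case False
  then have eq: "k + n - 1 = (k - 1) + n" by simp
  have "(k + n - 1) mod n = ((k - 1) + n) mod n" by (subst eq) (rule refl)
  also have "\<dots> = k - 1" using assms by simp
  finally show ?thesis using False by simp
qed

lemma succ_pred:
  fixes n :: nat
  assumes "k < n" "i < n"
  shows "((i + 1) mod n = k) \<longleftrightarrow> (i = (k + n - 1) mod n)"
  unfolding pr_eq[OF assms(1)]
proof (cases "i + 1 < n")
  case True
  then have "(i + 1) mod n = i + 1" by simp
  then show "((i + 1) mod n = k) \<longleftrightarrow> (i = (if k = 0 then n - 1 else k - 1))" using True assms by auto
next
  case False
  then have "i + 1 = n" using assms by simp
  then have "(i + 1) mod n = 0" by simp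
  then show "((i + 1) mod n = k) \<longleftrightarrow> (i = (if k = 0 then n - 1 else k - 1))" using \<open>i + 1 = n\<close> assms by auto
qed

lemma succ_mod_lt: "0 < n \<Longrightarrow> (i + 1) mod n < (n::nat)" by simp

lemma mem_ced:
  assumes "distinct vs" "k < length vs" "i < length vs"
  shows "vs ! k \<in> ced vs i \<longleftrightarrow> (k = i \<or> k = (i + 1) mod length vs)"
proof -
  have "0 < length vs" using assms(2) by linarith
  then have "(i + 1) mod length vs < length vs" by simp
  then show ?thesis using assms unfolding ced_def by (auto simp: nth_eq_iff_index_eq)
qed

lemma nmem_ced:
  assumes "w \<notin> set vs" "i < length vs"
  shows "w \<notin> ced vs i"
proof -
  have "0 < length vs" using assms(2) by linarith
  then have "(i + 1) mod length vs < length vs" by simp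
  then show ?thesis using assms unfolding ced_def by (auto dest: nth_mem)
qed

lemma ced_inj:
  assumes "distinct vs" "3 \<le> length vs"
  shows "inj_on (ced vs) {..<length vs}"
proof (rule inj_onI)
  fix i j assume ij: "i \<in> {..<length vs}" "j \<in> {..<length vs}" "ced vs i = ced vs j"
  let ?n = "length vs"
  have i: "i < ?n" and j: "j < ?n" using ij by auto
  have "vs ! i \<in> ced vs j" using ij(3) unfolding ced_def by auto
  then have h1: "i = j \<or> i = (j + 1) mod ?n" using mem_ced[OF assms(1) i j] by simp
  have "vs ! j \<in> ced vs i" using ij(3) unfolding ced_def by auto
  then have h2: "j = i \<or> j = (i + 1) mod ?n" using mem_ced[OF assms(1) j i] by simp
  show "i = j"
  proof (rule ccontr)
    assume ne: "i \<noteq> j"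
    then have a: "i = (j + 1) mod ?n" and b: "j = (i + 1) mod ?n" using h1 h2 by auto
    show False
    proof (cases "j + 1 < ?n")
      case True
      then have "i = j + 1" using a by simp
      show False
      proof (cases "i + 1 < ?n")
        case True
        then have "j = i + 1" using b by simp
        then show False using \<open>i = j + 1\<close> by simp
      next
        case False
        then have "i + 1 = ?n" using i by simp
        then have "j = 0" using b by simp
        then show False using \<open>i = j + 1\<close> \<open>i + 1 = ?n\<close> assms(2) by simp
      qed
    next
      case False
      then have "i = 0" using a j by (metis Suc_eq_plus1 Suc_lessI mod_self)
      then show False using b assms(2) j False by simp
    qed
  qed
qed

lemma cycle_card:
  assumes "cycle_edges V E C"
  shows "finite C \<and> 3 \<le> card C"
proof -
  obtain vs where vs: "3 \<le> length vs" "distinct vs" "C = ced vs ` {..<length vs}"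
    using assms unfolding cycle_edges_alt by blast
  then show ?thesis using ced_inj[OF vs(2,1)] by (simp add: card_image)
qed

lemma closed_succ:
  fixes n :: nat
  assumes "I \<subseteq> {..<n}" "i0 \<in> I" "\<And>i. i \<in> I \<Longrightarrow> (i + 1) mod n \<in> I"
  shows "{..<n} \<subseteq> I"
proof -
  have n: "0 < n" using assms by auto
  have all: "(i0 + m) mod n \<in> I" for m
  proof (induction m)
    case 0 then show ?case using assms by auto
  next
    case (Suc m)
    have "(i0 + Suc m) mod n = ((i0 + m) mod n + 1) mod n" by (simp add: mod_Suc_eq)
    then show ?case using assms(3)[OF Suc] by simp
  qed
  show ?thesis
  proof
    fix j assume "j \<in> {..<n}"
    moreover have "i0 < n" using assms by auto
    ultimately have "(i0 + (n - i0 + j)) mod n = j" by simp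
    then show "j \<in> I" using all[of "n - i0 + j"] by simp
  qed
qed

lemma dg_img:
  assumes "inj_on f A" "B \<subseteq> A"
  shows "dg (f ` B) w = card {i\<in>B. w \<in> f i}"
proof -
  have "{e\<in>f ` B. w \<in> e} = f ` {i\<in>B. w \<in> f i}" by blast
  moreover have "inj_on f {i\<in>B. w \<in> f i}"
    by (rule inj_on_subset[OF assms(1)]) (use assms(2) in auto)
  ultimately show ?thesis unfolding dg_def by (simp only: card_image)
qed

lemma cyc_dg_vertex:
  assumes "distinct vs" "3 \<le> length vs" "I \<subseteq> {..<length vs}" "k < length vs"
  shows "dg (ced vs ` I) (vs ! k) = card (I \<inter> {k, (k + length vs - 1) mod length vs})"
proof -
  let ?n = "length vs"
  have eq: "{i\<in>I. vs ! k \<in> ced vs i} = I \<inter> {k, (k + ?n - 1) mod ?n}"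
  proof (intro set_eqI iffI)
    fix i assume "i \<in> {i\<in>I. vs ! k \<in> ced vs i}"
    then have iI: "i \<in> I" and m: "vs ! k \<in> ced vs i" by auto
    have il: "i < ?n" using iI assms(3) by auto
    have "k = i \<or> k = (i + 1) mod ?n" using mem_ced[OF assms(1,4) il] m by simp
    moreover have "(k = (i + 1) mod ?n) \<longleftrightarrow> i = (k + ?n - 1) mod ?n" using succ_pred[OF assms(4) il] by metis
    ultimately show "i \<in> I \<inter> {k, (k + ?n - 1) mod ?n}" using iI by blast
  next
    fix i assume a: "i \<in> I \<inter> {k, (k + ?n - 1) mod ?n}"
    then have iI: "i \<in> I" by auto
    have il: "i < ?n" using iI assms(3) by auto
    have "(k = (i + 1) mod ?n) \<longleftrightarrow> i = (k + ?n - 1) mod ?n" using succ_pred[OF assms(4) il] by metis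
    then have "k = i \<or> k = (i + 1) mod ?n" using a by blast
    then have "vs ! k \<in> ced vs i" using mem_ced[OF assms(1,4) il] by simp
    then show "i \<in> {i\<in>I. vs ! k \<in> ced vs i}" using iI by auto
  qed
  have h: "dg (ced vs ` I) (vs ! k) = card {i\<in>I. vs ! k \<in> ced vs i}"
    by (rule dg_img[OF ced_inj[OF assms(1,2)] assms(3)])
  show ?thesis unfolding h eq by (rule refl)
qed

lemma chain:
  assumes "\<And>t. i \<le> t \<Longrightarrow> t < j \<Longrightarrow> (f t, f (Suc t)) \<in> R" "i \<le> j"
  shows "(f i, f j) \<in> R\<^sup>*"
  using assms
proof (induction j)
  case 0
  have "i = 0" using "0.prems"(2) by simp
  then show ?case by simp
next
  case (Suc j)
  show ?case
  proof (cases "i \<le> j")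
    case True
    have "(f i, f j) \<in> R\<^sup>*"
    proof (rule Suc.IH)
      fix t assume t: "i \<le> t" "t < j"
      then have "t < Suc j" by linarith
      then show "(f t, f (Suc t)) \<in> R" using Suc.prems(1) t(1) by blast
    next
      show "i \<le> j" by fact
    qed
    moreover have "(f j, f (Suc j)) \<in> R"
      using Suc.prems(1)[of j] True by blast
    ultimately show ?thesis by (rule rtrancl.rtrancl_into_rtrancl)
  next
    case False
    then have "i = Suc j" using Suc.prems(2) by linarith
    then show ?thesis by simp
  qed
qed

lemma cyc_dg_out:
  assumes "I \<subseteq> {..<length vs}" "w \<notin> set vs"
  shows "dg (ced vs ` I) w = 0"
proof -
  have "{e\<in>ced vs ` I. w \<in> e} = {}" using nmem_ced[OF assms(2)] assms(1) by auto
  then show ?thesis unfolding dg_def by (metis card.empty)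
qed

lemma pr_ne:
  fixes n :: nat
  assumes "k < n" "3 \<le> n" shows "(k + n - 1) mod n \<noteq> k"
  using pr_eq[OF assms(1)] assms by (auto split: if_splits)

lemma cyc_even:
  assumes "distinct vs" "3 \<le> length vs"
  shows "even (dg (ced vs ` {..<length vs}) w)"
proof (cases "w \<in> set vs")
  case True
  then obtain k where k: "k < length vs" "w = vs ! k" by (metis in_set_conv_nth)
  have "0 < length vs" using assms(2) by linarith
  then have "(k + length vs - 1) mod length vs < length vs" by simp
  then have "{..<length vs} \<inter> {k, (k + length vs - 1) mod length vs} = {k, (k + length vs - 1) mod length vs}"
    using k by auto
  then show ?thesis using cyc_dg_vertex[OF assms _ k(1), of "{..<length vs}"] k pr_ne[OF k(1) assms(2)]
    by simp
next
  case False
  then show ?thesis using cyc_dg_out[of "{..<length vs}" vs w] by simp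
qed

lemma cyc_proper:
  assumes "distinct vs" "3 \<le> length vs" "Y \<subseteq> ced vs ` {..<length vs}" "Y \<noteq> ced vs ` {..<length vs}" "Y \<noteq> {}"
  shows "\<exists>p q. p \<in> set vs \<and> q \<in> set vs \<and> p \<noteq> q \<and> odd (dg Y p) \<and> odd (dg Y q)"
proof -
  let ?n = "length vs"
  have npos: "0 < ?n" using assms(2) by linarith
  define I where "I = {i\<in>{..<?n}. ced vs i \<in> Y}"
  have YI: "Y = ced vs ` I" using assms(3) unfolding I_def by auto
  have Isub: "I \<subseteq> {..<?n}" unfolding I_def by auto
  have Ine: "I \<noteq> {}" using YI assms(5) by auto
  have Inf: "\<not> {..<?n} \<subseteq> I" using YI assms(4) Isub by auto
  obtain i where i: "i \<in> I" "(i + 1) mod ?n \<notin> I"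
    using closed_succ[OF Isub] Ine Inf by blast
  have cs: "{..<?n} - I \<subseteq> {..<?n}" by auto
  obtain j where j: "j \<in> {..<?n} - I" "(j + 1) mod ?n \<in> I"
  proof -
    obtain j0 where "j0 \<in> {..<?n} - I" using Inf by auto
    moreover have "\<not> {..<?n} \<subseteq> {..<?n} - I" using Ine Isub by auto
    ultimately obtain j where "j \<in> {..<?n} - I" "(j + 1) mod ?n \<notin> {..<?n} - I"
      using closed_succ[OF cs] by blast
    moreover have "(j + 1) mod ?n < ?n" using npos by simp
    ultimately show ?thesis using that by auto
  qed
  define k where "k = (i + 1) mod ?n"
  define k' where "k' = (j + 1) mod ?n"
  have kn: "k < ?n" "k' < ?n" unfolding k_def k'_def using npos by auto
  have in_: "i < ?n" "j < ?n" using i j Isub by auto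
  have pk: "(k + ?n - 1) mod ?n = i" using succ_pred[OF kn(1) in_(1)] k_def by simp
  have pk': "(k' + ?n - 1) mod ?n = j" using succ_pred[OF kn(2) in_(2)] k'_def by simp
  have "I \<inter> {k, (k + ?n - 1) mod ?n} = {i}" using pk i k_def by auto
  then have d1: "dg Y (vs ! k) = 1" using cyc_dg_vertex[OF assms(1,2) Isub kn(1)] YI by simp
  have "I \<inter> {k', (k' + ?n - 1) mod ?n} = {k'}" using pk' j k'_def by auto
  then have d2: "dg Y (vs ! k') = 1" using cyc_dg_vertex[OF assms(1,2) Isub kn(2)] YI by simp
  have "k \<noteq> k'" using i(2) j(2) k_def k'_def by auto
  then have "vs ! k \<noteq> vs ! k'" using assms(1) kn by (simp add: nth_eq_iff_index_eq)
  then show ?thesis using d1 d2 kn by (intro exI[of _ "vs ! k"] exI[of _ "vs ! k'"]) auto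
qed

lemma simple_fin:
  assumes "simple_graph V E"
  shows "finite E" "E \<subseteq> Pow V"
proof -
  show sub: "E \<subseteq> Pow V"
  proof
    fix e assume "e \<in> E"
    then obtain u v where "u \<in> V" "v \<in> V" "e = {u, v}" using assms unfolding simple_graph_def by blast
    then show "e \<in> Pow V" by simp
  qed
  have "finite V" using assms unfolding simple_graph_def by simp
  then show "finite E" using sub by (meson finite_Pow_iff finite_subset)
qed

lemma nbr:
  assumes "simple_graph V E" "no_isolated_vertices V E" "u \<in> V"
  shows "\<exists>b. b \<in> V \<and> b \<noteq> u \<and> {u, b} \<in> E"
proof -
  obtain e where e: "e \<in> E" "u \<in> e" using assms unfolding no_isolated_vertices_def by blast
  then obtain p q where pq: "p \<in> V" "q \<in> V" "p \<noteq> q" "e = {p, q}"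
    using assms(1) unfolding simple_graph_def by blast
  show ?thesis
  proof (cases "u = p")
    case True
    then show ?thesis using pq e by (intro exI[of _ q]) simp
  next
    case False
    then have "u = q" using e pq by simp
    then have "{u, p} = e" using pq by (simp add: insert_commute)
    then show ?thesis using pq e \<open>u = q\<close> by (intro exI[of _ p]) simp
  qed
qed

lemma extra_circ:
  assumes cl: "\<And>A B. A \<in> W \<Longrightarrow> B \<in> W \<Longrightarrow> sdiff A B \<in> W"
    and X0: "finite X0" "X0 \<in> W" "X0 \<noteq> {}" "card X0 \<le> 2"
  shows "\<exists>D\<in>circs W. D \<notin> cycle_matroid_circuits V E"
proof -
  from decomp[OF X0(1) cl X0(2)] obtain \<D> where
    D0: "\<D> \<subseteq> circs W \<and> (\<forall>P\<in>\<D>. \<forall>Q\<in>\<D>. P \<noteq> Q \<longrightarrow> P \<inter> Q = {}) \<and> \<Union>\<D> = X0"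
    by (rule exE)
  have D: "\<D> \<subseteq> circs W" "\<Union>\<D> = X0" using D0 by simp_all
  obtain x where "x \<in> X0" using X0(3) by blast
  then have "x \<in> \<Union>\<D>" using D(2) by simp
  then obtain D where DD: "D \<in> \<D>" "x \<in> D" by (rule UnionE)
  have "D \<subseteq> X0" using Union_upper[OF DD(1)] D(2) by simp
  then have "card D \<le> 2" using card_mono[OF X0(1)] X0(4) by (meson order_trans)
  then have "D \<notin> cycle_matroid_circuits V E"
    using cycle_card[of V E D] unfolding cycle_matroid_circuits_def by auto
  moreover have "D \<in> circs W" using DD(1) D(1) by (rule subsetD[rotated])
  ultimately show ?thesis by (intro bexI[of _ D])
qed

lemma key:
  assumes sg: "simple_graph V E" and ni: "no_isolated_vertices V E"
    and WS: "W \<subseteq> Pow E"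
    and cl: "\<And>A B. A \<in> W \<Longrightarrow> B \<in> W \<Longrightarrow> sdiff A B \<in> W"
    and cyc: "cycle_matroid_circuits V E \<subseteq> circs W"
    and D: "D \<in> circs W" "D \<notin> cycle_matroid_circuits V E"
  shows "binary_matroid E (circs W) \<and> nontrivial_circuit_injection V E id E (circs W)"
proof
  have "V \<noteq> {}" using sg unfolding simple_graph_def by simp
  then obtain u where "u \<in> V" by blast
  then obtain b where "{u, b} \<in> E" using nbr[OF sg ni] by blast
  then have "E \<noteq> {}" by blast
  then show "binary_matroid E (circs W)" using circs_binary[OF simple_fin(1)[OF sg] _ WS cl] by simp
  show "nontrivial_circuit_injection V E id E (circs W)"
    unfolding nontrivial_circuit_injection_def circuit_injection_def
  proof (intro conjI ballI bexI[of _ D])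
    show "bij_betw id E E" by (rule bij_betw_id)
    fix C assume "C \<in> cycle_matroid_circuits V E"
    then show "id ` C \<in> circs W" using cyc by auto
  next
    fix C assume "C \<in> cycle_matroid_circuits V E"
    then show "D \<noteq> id ` C" using D(2) by auto
  next
    show "D \<in> circs W" by fact
  qed
qed

lemma dg_out_sub:
  assumes "D \<subseteq> ced vs ` {..<length vs}" "w \<notin> set vs"
  shows "dg D w = 0"
proof -
  have "{e\<in>D. w \<in> e} = {}" using nmem_ced[OF assms(2)] assms(1) by blast
  then show ?thesis unfolding dg_def by (metis card.empty)
qed

lemma small_case:
  assumes sg: "simple_graph V E" and ni: "no_isolated_vertices V E" and c: "card V < 3"
  shows "\<exists>W. W \<subseteq> Pow E \<and> (\<forall>A B. A \<in> W \<longrightarrow> B \<in> W \<longrightarrow> sdiff A B \<in> W) \<and>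
     cycle_matroid_circuits V E \<subseteq> circs W \<and> (\<exists>D\<in>circs W. D \<notin> cycle_matroid_circuits V E)"
proof (intro exI[of _ "Pow E"] conjI allI impI)
  show "Pow E \<subseteq> Pow E" by simp
  fix A B assume "A \<in> Pow E" "B \<in> Pow E"
  then show "sdiff A B \<in> Pow E" unfolding sdiff_def by auto
next
  have fV: "finite V" using sg unfolding simple_graph_def by simp
  have "cycle_matroid_circuits V E = {}"
  proof (rule ccontr)
    assume "cycle_matroid_circuits V E \<noteq> {}"
    then obtain C where "cycle_edges V E C" unfolding cycle_matroid_circuits_def by blast
    then obtain vs where vs: "3 \<le> length vs" "distinct vs" "set vs \<subseteq> V"
      unfolding cycle_edges_alt by blast
    have "length vs = card (set vs)" using vs(2) by (simp add: distinct_card)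
    also have "\<dots> \<le> card V" using card_mono[OF fV vs(3)] .
    finally show False using vs(1) c by linarith
  qed
  then show "cycle_matroid_circuits V E \<subseteq> circs (Pow E)" by simp
next
  have "V \<noteq> {}" using sg unfolding simple_graph_def by simp
  then obtain u where "u \<in> V" by blast
  then obtain b where e: "{u, b} \<in> E" using nbr[OF sg ni] by blast
  show "\<exists>D\<in>circs (Pow E). D \<notin> cycle_matroid_circuits V E"
  proof (rule extra_circ)
    show "finite {{u, b}}" by simp
    show "{{u, b}} \<in> Pow E" using e by simp
    show "{{u, b}} \<noteq> {}" by simp
    show "card {{u, b}} \<le> 2" by simp
    fix A B assume "A \<in> Pow E" "B \<in> Pow E"
    then show "sdiff A B \<in> Pow E" unfolding sdiff_def by auto
  qed
qed

lemma dg_one: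
  assumes "w \<in> P" "w \<notin> Q" "P \<noteq> Q"
  shows "dg {P, Q} w = 1"
proof -
  have "{e\<in>{P, Q}. w \<in> e} = {P}" using assms by blast
  then show ?thesis unfolding dg_def by simp
qed

lemma dg_zero:
  assumes "w \<notin> P" "w \<notin> Q"
  shows "dg {P, Q} w = 0"
proof -
  have "{e\<in>{P, Q}. w \<in> e} = {}" using assms by blast
  then show ?thesis unfolding dg_def by (metis card.empty)
qed

lemma constr:
  assumes sg: "simple_graph V E" and ab: "{a, b} \<in> E" and cd: "{c, d} \<in> E"
    and ne: "a \<noteq> b" "a \<noteq> c" "a \<noteq> d" "c \<noteq> b" "c \<noteq> d"
    and sep: "\<And>vs. distinct vs \<Longrightarrow> 3 \<le> length vs \<Longrightarrow> set vs \<subseteq> V \<Longrightarrow>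
       (\<forall>i<length vs. ced vs i \<in> E) \<Longrightarrow>
       \<not> (a \<in> set vs \<and> c \<in> set vs) \<and> (b \<noteq> d \<longrightarrow> \<not> (b \<in> set vs \<and> d \<in> set vs))"
  shows "\<exists>W. W \<subseteq> Pow E \<and> (\<forall>A B. A \<in> W \<longrightarrow> B \<in> W \<longrightarrow> sdiff A B \<in> W) \<and>
     cycle_matroid_circuits V E \<subseteq> circs W \<and> (\<exists>D\<in>circs W. D \<notin> cycle_matroid_circuits V E)"
proof -
  have fE: "finite E" using simple_fin[OF sg] by simp
  define W where "W = {X. X \<subseteq> E \<and> (\<forall>w\<in>V - {a, b, c, d}. even (dg X w)) \<and>
     (even (dg X a) \<longleftrightarrow> even (dg X c)) \<and> (even (dg X b) \<longleftrightarrow> even (dg X d))}"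
  have WS: "W \<subseteq> Pow E" unfolding W_def by auto
  have cl: "sdiff A B \<in> W" if A: "A \<in> W" and B: "B \<in> W" for A B
  proof -
    have AE: "A \<subseteq> E" and BE: "B \<subseteq> E" using A B unfolding W_def by simp_all
    have fA: "finite A" using AE fE by (rule finite_subset)
    have fB: "finite B" using BE fE by (rule finite_subset)
    have S: "sdiff A B \<subseteq> E" using AE BE unfolding sdiff_def by blast
    have h: "\<And>w. even (dg (sdiff A B) w) \<longleftrightarrow> (even (dg A w) \<longleftrightarrow> even (dg B w))"
      by (rule dg_sdiff[OF fA fB])
    have Aw: "\<forall>w\<in>V - {a, b, c, d}. even (dg A w)" "even (dg A a) \<longleftrightarrow> even (dg A c)"
      "even (dg A b) \<longleftrightarrow> even (dg A d)" using A unfolding W_def by simp_all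
    have Bw: "\<forall>w\<in>V - {a, b, c, d}. even (dg B w)" "even (dg B a) \<longleftrightarrow> even (dg B c)"
      "even (dg B b) \<longleftrightarrow> even (dg B d)" using B unfolding W_def by simp_all
    have 1: "\<forall>w\<in>V - {a, b, c, d}. even (dg (sdiff A B) w)"
    proof
      fix w assume "w \<in> V - {a, b, c, d}"
      then have "even (dg A w)" "even (dg B w)" using Aw(1) Bw(1) by simp_all
      then show "even (dg (sdiff A B) w)" using h[of w] by simp
    qed
    have 2: "even (dg (sdiff A B) a) \<longleftrightarrow> even (dg (sdiff A B) c)"
      using h[of a] h[of c] Aw(2) Bw(2) by blast
    have 3: "even (dg (sdiff A B) b) \<longleftrightarrow> even (dg (sdiff A B) d)"
      using h[of b] h[of d] Aw(3) Bw(3) by blast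
    show ?thesis unfolding W_def using S 1 2 3 by simp
  qed
  have cyc: "cycle_matroid_circuits V E \<subseteq> circs W"
  proof
    fix C assume "C \<in> cycle_matroid_circuits V E"
    then obtain vs where vs: "3 \<le> length vs" "distinct vs" "set vs \<subseteq> V"
      "\<forall>i<length vs. ced vs i \<in> E" "C = ced vs ` {..<length vs}"
      unfolding cycle_matroid_circuits_def cycle_edges_alt by blast
    have sp: "\<not> (a \<in> set vs \<and> c \<in> set vs)" "b \<noteq> d \<longrightarrow> \<not> (b \<in> set vs \<and> d \<in> set vs)"
      using sep[OF vs(2,1,3,4)] by simp_all
    have CE: "C \<subseteq> E" using vs(4,5) by auto
    have Cev: "\<And>w. even (dg C w)" using cyc_even[OF vs(2,1)] vs(5) by simp
    have CW: "C \<in> W" unfolding W_def using CE Cev by simp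
    have Cne: "C \<noteq> {}" using cycle_card[of V E C] \<open>C \<in> cycle_matroid_circuits V E\<close>
      unfolding cycle_matroid_circuits_def by auto
    show "C \<in> circs W"
      unfolding circs_def
    proof (intro CollectI conjI ballI impI)
      show "C \<in> W" by fact
      show "C \<noteq> {}" by fact
      fix D assume DW: "D \<in> W" and DC: "D \<subseteq> C" and Dne: "D \<noteq> {}"
      show "D = C"
      proof (rule ccontr)
        assume "D \<noteq> C"
        then obtain p q where pq: "p \<in> set vs" "q \<in> set vs" "p \<noteq> q" "odd (dg D p)" "odd (dg D q)"
          using cyc_proper[OF vs(2,1) _ _ Dne] DC vs(5) by blast
        have DC': "D \<subseteq> ced vs ` {..<length vs}" using DC vs(5) by simp
        have Dw: "\<forall>w\<in>V - {a, b, c, d}. even (dg D w)" "even (dg D a) \<longleftrightarrow> even (dg D c)"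
          "even (dg D b) \<longleftrightarrow> even (dg D d)" using DW unfolding W_def by simp_all
        have oddin: "\<And>w. odd (dg D w) \<Longrightarrow> w \<in> set vs"
          using dg_out_sub[OF DC'] by fastforce
        have claim: "r = b \<and> b = d" if r: "r \<in> set vs" "odd (dg D r)" for r
        proof -
          have rV: "r \<in> V" using r(1) vs(3) by blast
          have "r \<in> {a, b, c, d}" using Dw(1) rV r(2) by blast
          moreover have "r \<noteq> a"
          proof
            assume "r = a"
            then have "odd (dg D c)" using Dw(2) r(2) by simp
            then have "c \<in> set vs" by (rule oddin)
            then show False using sp(1) r(1) \<open>r = a\<close> by simp
          qed
          moreover have "r \<noteq> c"
          proof
            assume "r = c"
            then have "odd (dg D a)" using Dw(2) r(2) by simp
            then have "a \<in> set vs" by (rule oddin)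
            then show False using sp(1) r(1) \<open>r = c\<close> by simp
          qed
          moreover have "b = d"
          proof (rule ccontr)
            assume bd: "b \<noteq> d"
            have "r = b \<or> r = d" using calculation by simp
            then show False
            proof
              assume "r = b"
              then have "odd (dg D d)" using Dw(3) r(2) by simp
              then have "d \<in> set vs" by (rule oddin)
              then show False using sp(2) bd r(1) \<open>r = b\<close> by simp
            next
              assume "r = d"
              then have "odd (dg D b)" using Dw(3) r(2) by simp
              then have "b \<in> set vs" by (rule oddin)
              then show False using sp(2) bd r(1) \<open>r = d\<close> by simp
            qed
          qed
          ultimately show ?thesis by auto
        qed
        have "p = b" using claim[OF pq(1) pq(4)] by simp
        moreover have "q = b" using claim[OF pq(2) pq(5)] by simp
        ultimately show False using pq(3) by simp
      qed
    qed
  qed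
  define X0 where "X0 = {{a, b}, {c, d}}"
  have ne2: "{a, b} \<noteq> {c, d}"
  proof
    assume h: "{a, b} = {c, d}"
    have "a \<in> {a, b}" by simp
    then have "a \<in> {c, d}" unfolding h .
    then show False using ne by simp
  qed
  have X0W: "X0 \<in> W"
  proof -
    have "X0 \<subseteq> E" unfolding X0_def using ab cd by simp
    moreover have "\<forall>w\<in>V - {a, b, c, d}. even (dg X0 w)"
    proof
      fix w assume "w \<in> V - {a, b, c, d}"
      then have "dg X0 w = 0" unfolding X0_def by (intro dg_zero) auto
      then show "even (dg X0 w)" by simp
    qed
    moreover have "dg X0 a = 1" unfolding X0_def using ne ne2 by (intro dg_one) auto
    moreover have "dg X0 c = 1" unfolding X0_def using ne ne2
      by (subst insert_commute) (intro dg_one, auto)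
    moreover have "even (dg X0 b) \<longleftrightarrow> even (dg X0 d)"
    proof (cases "b = d")
      case True then show ?thesis by simp
    next
      case False
      have "dg X0 b = 1" unfolding X0_def using ne ne2 False by (intro dg_one) auto
      moreover have "dg X0 d = 1" unfolding X0_def using ne ne2 False
        by (subst insert_commute) (intro dg_one, auto)
      ultimately show ?thesis by simp
    qed
    ultimately show ?thesis unfolding W_def by simp
  qed
  have "\<exists>D\<in>circs W. D \<notin> cycle_matroid_circuits V E"
  proof (rule extra_circ)
    show "finite X0" unfolding X0_def by simp
    show "X0 \<in> W" by fact
    show "X0 \<noteq> {}" unfolding X0_def by simp
    show "card X0 \<le> 2" unfolding X0_def by (simp add: card_insert_if)
    fix A B assume "A \<in> W" "B \<in> W" then show "sdiff A B \<in> W" by (rule cl)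
  qed
  then show ?thesis using WS cl cyc by blast
qed

definition adj :: "'v set \<Rightarrow> 'v set set \<Rightarrow> ('v \<times> 'v) set" where
  "adj V E = {(x, y). x \<in> V \<and> y \<in> V \<and> {x, y} \<in> E}"

lemma gc_adj: "graph_connected V E \<longleftrightarrow> V \<noteq> {} \<and> (\<forall>u\<in>V. \<forall>v\<in>V. (u, v) \<in> (adj V E)\<^sup>*)"
  unfolding graph_connected_def adj_def by (rule refl)

lemma adj_sym: "sym (adj V E)"
  unfolding sym_def adj_def by (auto simp: insert_commute)

lemma rt_sym: "(p, q) \<in> (adj V E)\<^sup>* \<Longrightarrow> (q, p) \<in> (adj V E)\<^sup>*"
  using sym_rtrancl[OF adj_sym] by (rule symD)

lemma adj_sym1: "(p, q) \<in> adj V E \<Longrightarrow> (q, p) \<in> adj V E"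
  using adj_sym by (rule symD)

lemma cross:
  assumes "(p, q) \<in> R\<^sup>*" "P p"
  shows "\<not> P q \<longrightarrow> (\<exists>s t. (s, t) \<in> R \<and> P s \<and> \<not> P t)"
  using assms(1)
proof (induction rule: rtrancl_induct)
  case base
  show ?case using assms(2) by simp
next
  case (step y z)
  show ?case
  proof (cases "P y")
    case True
    then show ?thesis using step.hyps(2) by blast
  next
    case False
    then show ?thesis using step.IH by blast
  qed
qed

lemma ced_succ:
  assumes "Suc t < length vs"
  shows "ced vs t = {vs ! t, vs ! Suc t}"
  unfolding ced_def using assms by simp

lemma cyc_conn:
  assumes vs: "distinct vs" "3 \<le> length vs" "set vs \<subseteq> V" "\<forall>i<length vs. ced vs i \<in> E"
    and i: "i < length vs"
  shows "(vs ! 0, vs ! i) \<in> (adj V E)\<^sup>*"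
proof (rule chain[of 0 i "(!) vs"])
  fix t assume t: "0 \<le> t" "t < i"
  then have st: "Suc t < length vs" using i by linarith
  have "ced vs t \<in> E" using vs(4) st by simp
  then have "{vs ! t, vs ! Suc t} \<in> E" using ced_succ[OF st] by simp
  moreover have "vs ! t \<in> V" "vs ! Suc t \<in> V" using vs(3) st nth_mem[of t vs] nth_mem[of "Suc t" vs] by auto
  ultimately show "(vs ! t, vs ! Suc t) \<in> adj V E" unfolding adj_def by simp
qed simp

lemma cyc_seg:
  assumes vs: "distinct vs" "3 \<le> length vs" "set vs \<subseteq> V" "\<forall>i<length vs. ced vs i \<in> E"
    and ij: "i \<le> j" "j < length vs" and nx: "\<And>t. i \<le> t \<Longrightarrow> t \<le> j \<Longrightarrow> vs ! t \<noteq> x"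
  shows "(vs ! i, vs ! j) \<in> (adj (V - {x}) {e\<in>E. x \<notin> e})\<^sup>*"
proof (rule chain[of i j "(!) vs"])
  fix t assume t: "i \<le> t" "t < j"
  then have st: "Suc t < length vs" using ij by linarith
  have "ced vs t \<in> E" using vs(4) st by simp
  then have e: "{vs ! t, vs ! Suc t} \<in> E" using ced_succ[OF st] by simp
  have n1: "vs ! t \<noteq> x" using nx t by simp
  have n2: "vs ! Suc t \<noteq> x" using nx t by simp
  have "vs ! t \<in> V" "vs ! Suc t \<in> V" using vs(3) st nth_mem[of t vs] nth_mem[of "Suc t" vs] by auto
  then show "(vs ! t, vs ! Suc t) \<in> adj (V - {x}) {e\<in>E. x \<notin> e}"
    unfolding adj_def using e n1 n2 by simp
qed (use ij in simp)

lemma cyc_conn_x_aux: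
  assumes vs: "distinct vs" "3 \<le> length vs" "set vs \<subseteq> V" "\<forall>i<length vs. ced vs i \<in> E"
    and ij: "i \<le> j" "j < length vs" and nx: "vs ! i \<noteq> x" "vs ! j \<noteq> x"
  shows "(vs ! i, vs ! j) \<in> (adj (V - {x}) {e\<in>E. x \<notin> e})\<^sup>*"
proof (cases "\<forall>t. i \<le> t \<and> t \<le> j \<longrightarrow> vs ! t \<noteq> x")
  case True
  then show ?thesis using cyc_seg[OF vs ij, of x] by blast
next
  case False
  let ?n = "length vs"
  let ?R = "adj (V - {x}) {e\<in>E. x \<notin> e}"
  obtain k where k: "i \<le> k" "k \<le> j" "vs ! k = x" using False by blast
  have ik: "i < k" using k nx by (cases "i = k") auto
  have kj: "k < j" using k nx by (cases "k = j") auto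
  have only: "t = k" if "t < ?n" "vs ! t = x" for t
  proof -
    have kn: "k < ?n" using kj ij by linarith
    have "vs ! t = vs ! k" using that k by simp
    then show ?thesis using nth_eq_iff_index_eq[OF vs(1) that(1) kn] by simp
  qed
  have s1: "(vs ! 0, vs ! i) \<in> ?R\<^sup>*"
  proof (rule cyc_seg[OF vs])
    show "0 \<le> i" by simp
    show "i < ?n" using ij ik kj by linarith
    fix t assume t: "0 \<le> t" "t \<le> i"
    show "vs ! t \<noteq> x"
    proof
      assume h: "vs ! t = x"
      have "t < ?n" using t ik kj ij by linarith
      then have "t = k" using h by (rule only)
      then show False using t ik by linarith
    qed
  qed
  have s2: "(vs ! j, vs ! (?n - 1)) \<in> ?R\<^sup>*"
  proof (rule cyc_seg[OF vs])
    show "j \<le> ?n - 1" using ij by linarith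
    show "?n - 1 < ?n" using vs(2) by linarith
    fix t assume t: "j \<le> t" "t \<le> ?n - 1"
    show "vs ! t \<noteq> x"
    proof
      assume h: "vs ! t = x"
      have "t < ?n" using t vs(2) by linarith
      then have "t = k" using h by (rule only)
      then show False using t kj by linarith
    qed
  qed
  have np: "?n - 1 < ?n" using vs(2) by linarith
  have "(?n - 1) + 1 = ?n" using vs(2) by linarith
  then have "((?n - 1) + 1) mod ?n = 0" by simp
  then have "ced vs (?n - 1) = {vs ! (?n - 1), vs ! 0}" unfolding ced_def by simp
  then have e: "{vs ! (?n - 1), vs ! 0} \<in> E" using vs(4) np by metis
  have x1: "vs ! (?n - 1) \<noteq> x"
  proof
    assume "vs ! (?n - 1) = x"
    then have "?n - 1 = k" using np by (intro only)
    then show False using kj ij by linarith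
  qed
  have x0: "vs ! 0 \<noteq> x"
  proof
    assume "vs ! 0 = x"
    moreover have "0 < ?n" using vs(2) by linarith
    ultimately have "0 = k" by (intro only)
    then show False using ik by linarith
  qed
  have n0: "0 < ?n" using vs(2) by linarith
  have "vs ! (?n - 1) \<in> V" "vs ! 0 \<in> V" using vs(3) nth_mem[OF np] nth_mem[OF n0] by auto
  then have s3: "(vs ! (?n - 1), vs ! 0) \<in> ?R" unfolding adj_def using e x1 x0 by simp
  have "(vs ! i, vs ! 0) \<in> ?R\<^sup>*" using s1 by (rule rt_sym)
  also have "(vs ! 0, vs ! (?n - 1)) \<in> ?R\<^sup>*" using adj_sym1[OF s3] by simp
  also have "(vs ! (?n - 1), vs ! j) \<in> ?R\<^sup>*" using s2 by (rule rt_sym)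
  finally show ?thesis .
qed

lemma cyc_conn_x:
  assumes vs: "distinct vs" "3 \<le> length vs" "set vs \<subseteq> V" "\<forall>i<length vs. ced vs i \<in> E"
    and pq: "p \<in> set vs" "q \<in> set vs" "p \<noteq> x" "q \<noteq> x"
  shows "(p, q) \<in> (adj (V - {x}) {e\<in>E. x \<notin> e})\<^sup>*"
proof -
  obtain i where i: "i < length vs" "p = vs ! i" using pq(1) by (metis in_set_conv_nth)
  obtain j where j: "j < length vs" "q = vs ! j" using pq(2) by (metis in_set_conv_nth)
  show ?thesis
  proof (cases "i \<le> j")
    case True
    then show ?thesis using cyc_conn_x_aux[OF vs True j(1)] i j pq by simp
  next
    case False
    then have "j \<le> i" by simp
    then have "(q, p) \<in> (adj (V - {x}) {e\<in>E. x \<notin> e})\<^sup>*"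
      using cyc_conn_x_aux[OF vs _ i(1)] i j pq by simp
    then show ?thesis by (rule rt_sym)
  qed
qed

lemma cycle_pair_conn:
  assumes vs: "distinct vs" "3 \<le> length vs" "set vs \<subseteq> V" "\<forall>i<length vs. ced vs i \<in> E"
    and pq: "p \<in> set vs" "q \<in> set vs"
  shows "(p, q) \<in> (adj V E)\<^sup>*"
proof -
  obtain i where i: "i < length vs" "p = vs ! i" using pq(1) by (metis in_set_conv_nth)
  obtain j where j: "j < length vs" "q = vs ! j" using pq(2) by (metis in_set_conv_nth)
  have "(p, vs ! 0) \<in> (adj V E)\<^sup>*" using rt_sym[OF cyc_conn[OF vs i(1)]] i(2) by simp
  also have "(vs ! 0, q) \<in> (adj V E)\<^sup>*" using cyc_conn[OF vs j(1)] j(2) by simp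
  finally show ?thesis .
qed

lemma disc_case:
  assumes sg: "simple_graph V E" and ni: "no_isolated_vertices V E"
    and uv: "u \<in> V" "v \<in> V" "(u, v) \<notin> (adj V E)\<^sup>*"
  shows "\<exists>W. W \<subseteq> Pow E \<and> (\<forall>A B. A \<in> W \<longrightarrow> B \<in> W \<longrightarrow> sdiff A B \<in> W) \<and>
     cycle_matroid_circuits V E \<subseteq> circs W \<and> (\<exists>D\<in>circs W. D \<notin> cycle_matroid_circuits V E)"
proof -
  let ?R = "adj V E"
  obtain b where b: "b \<in> V" "b \<noteq> u" "{u, b} \<in> E" using nbr[OF sg ni uv(1)] by blast
  obtain d where d: "d \<in> V" "d \<noteq> v" "{v, d} \<in> E" using nbr[OF sg ni uv(2)] by blast
  have ub: "(u, b) \<in> ?R" using b uv unfolding adj_def by simp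
  have vd: "(v, d) \<in> ?R" using d uv unfolding adj_def by simp
  have ubs: "(u, b) \<in> ?R\<^sup>*" using ub by simp
  have ud: "(u, d) \<notin> ?R\<^sup>*"
  proof
    assume "(u, d) \<in> ?R\<^sup>*"
    then have "(u, v) \<in> ?R\<^sup>*" using adj_sym1[OF vd] by (rule rtrancl.rtrancl_into_rtrancl)
    then show False using uv(3) by simp
  qed
  show ?thesis
  proof (rule constr[OF sg b(3) d(3)])
    show "u \<noteq> b" using b by simp
    show "u \<noteq> v" using uv(3) by auto
    show "u \<noteq> d" using ud by auto
    show "v \<noteq> b" using uv(3) ubs by auto
    show "v \<noteq> d" using d by simp
    fix vs assume vs: "distinct vs" "3 \<le> length vs" "set vs \<subseteq> V" "\<forall>i<length vs. ced vs i \<in> E"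
    have 1: "\<not> (u \<in> set vs \<and> v \<in> set vs)"
    proof
      assume "u \<in> set vs \<and> v \<in> set vs"
      then have "(u, v) \<in> ?R\<^sup>*" using cycle_pair_conn[OF vs(1,2,3,4)] by simp
      then show False using uv(3) by simp
    qed
    have 2: "\<not> (b \<in> set vs \<and> d \<in> set vs)"
    proof
      assume "b \<in> set vs \<and> d \<in> set vs"
      then have "(b, d) \<in> ?R\<^sup>*" using cycle_pair_conn[OF vs(1,2,3,4)] by simp
      then have "(u, d) \<in> ?R\<^sup>*" using ubs by (rule rtrancl_trans[rotated])
      then show False using ud by simp
    qed
    show "\<not> (u \<in> set vs \<and> v \<in> set vs) \<and> (b \<noteq> d \<longrightarrow> \<not> (b \<in> set vs \<and> d \<in> set vs))"
      using 1 2 by simp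
  qed
qed

lemma reach_in:
  assumes "(u, w) \<in> (adj (V - {x}) {e\<in>E. x \<notin> e})\<^sup>*"
  shows "w = u \<or> w \<in> V - {x}"
  using assms by (rule rtranclE) (auto simp: adj_def)

lemma cut_case:
  assumes sg: "simple_graph V E" and ni: "no_isolated_vertices V E"
    and con: "graph_connected V E" and x: "x \<in> V"
    and uv: "u \<in> V - {x}" "v \<in> V - {x}" "(u, v) \<notin> (adj (V - {x}) {e\<in>E. x \<notin> e})\<^sup>*"
  shows "\<exists>W. W \<subseteq> Pow E \<and> (\<forall>A B. A \<in> W \<longrightarrow> B \<in> W \<longrightarrow> sdiff A B \<in> W) \<and>
     cycle_matroid_circuits V E \<subseteq> circs W \<and> (\<exists>D\<in>circs W. D \<notin> cycle_matroid_circuits V E)"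
proof -
  let ?R = "adj V E"
  let ?Rx = "adj (V - {x}) {e\<in>E. x \<notin> e}"
  have allc: "\<forall>p\<in>V. \<forall>q\<in>V. (p, q) \<in> ?R\<^sup>*" using con unfolding gc_adj by simp
  have ux: "(u, x) \<in> ?R\<^sup>*" using allc uv(1) x by simp
  have vx: "(v, x) \<in> ?R\<^sup>*" using allc uv(2) x by simp
  have nux: "(u, x) \<notin> ?Rx\<^sup>*"
  proof
    assume "(u, x) \<in> ?Rx\<^sup>*"
    then have "x = u \<or> x \<in> V - {x}" by (rule reach_in)
    then show False using uv(1) by auto
  qed
  have "\<exists>s t. (s, t) \<in> ?R \<and> (u, s) \<in> ?Rx\<^sup>* \<and> \<not> (u, t) \<in> ?Rx\<^sup>*"
    using cross[of u x ?R "\<lambda>w. (u, w) \<in> ?Rx\<^sup>*", OF ux] nux by simp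
  then obtain s t where st: "(s, t) \<in> ?R" "(u, s) \<in> ?Rx\<^sup>*" "(u, t) \<notin> ?Rx\<^sup>*" by blast
  have sV: "s \<in> V - {x}" using reach_in[OF st(2)] uv(1) by auto
  have stE: "{s, t} \<in> E" "t \<in> V" using st(1) unfolding adj_def by simp_all
  have tx: "t = x"
  proof (rule ccontr)
    assume "t \<noteq> x"
    then have "(s, t) \<in> ?Rx" using sV stE unfolding adj_def by auto
    then have "(u, t) \<in> ?Rx\<^sup>*" using st(2) by (rule rtrancl.rtrancl_into_rtrancl[rotated])
    then show False using st(3) by simp
  qed
  have "\<exists>s t. (s, t) \<in> ?R \<and> (s \<noteq> x \<and> (u, s) \<notin> ?Rx\<^sup>*) \<and> \<not> (t \<noteq> x \<and> (u, t) \<notin> ?Rx\<^sup>*)"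
    using cross[of v x ?R "\<lambda>w. w \<noteq> x \<and> (u, w) \<notin> ?Rx\<^sup>*", OF vx] uv by simp
  then obtain s' t' where st': "(s', t') \<in> ?R" "s' \<noteq> x" "(u, s') \<notin> ?Rx\<^sup>*"
    "t' = x \<or> (u, t') \<in> ?Rx\<^sup>*" by blast
  have stE': "{s', t'} \<in> E" "s' \<in> V" "t' \<in> V" using st'(1) unfolding adj_def by simp_all
  have tx': "t' = x"
  proof (rule ccontr)
    assume nt: "t' \<noteq> x"
    then have ut: "(u, t') \<in> ?Rx\<^sup>*" using st'(4) by simp
    have "{t', s'} \<in> E" using stE'(1) by (simp add: insert_commute)
    then have "(t', s') \<in> ?Rx" using nt st'(2) stE' unfolding adj_def by auto
    then have "(u, s') \<in> ?Rx\<^sup>*" using ut by (rule rtrancl.rtrancl_into_rtrancl[rotated])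
    then show False using st'(3) by simp
  qed
  have e1: "{s, x} \<in> E" using stE tx by simp
  have e2: "{s', x} \<in> E" using stE' tx' by simp
  show ?thesis
  proof (rule constr[OF sg e1 e2])
    show "s \<noteq> x" using sV by simp
    show "s \<noteq> s'" using st(2) st'(3) by auto
    show "s \<noteq> x" using sV by simp
    show "s' \<noteq> x" using st'(2) by simp
    show "s' \<noteq> x" using st'(2) by simp
    fix vs assume vs: "distinct vs" "3 \<le> length vs" "set vs \<subseteq> V" "\<forall>i<length vs. ced vs i \<in> E"
    have "\<not> (s \<in> set vs \<and> s' \<in> set vs)"
    proof
      assume h: "s \<in> set vs \<and> s' \<in> set vs"
      have "(s, s') \<in> ?Rx\<^sup>*" using cyc_conn_x[OF vs] h sV st'(2) by simp
      then have "(u, s') \<in> ?Rx\<^sup>*" using st(2) by (rule rtrancl_trans[rotated])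
      then show False using st'(3) by simp
    qed
    then show "\<not> (s \<in> set vs \<and> s' \<in> set vs) \<and> (x \<noteq> x \<longrightarrow> \<not> (x \<in> set vs \<and> x \<in> set vs))"
      by simp
  qed
qed

theorem corollary2p1:
  fixes V :: "'v set" and E :: "'v set set"
  assumes "simple_graph V E"
    and "no_isolated_vertices V E"
    and "\<nexists>(f :: 'v set \<Rightarrow> 'v set) S Cs.
           binary_matroid S Cs \<and> nontrivial_circuit_injection V E f S Cs"
  shows "two_connected V E"
proof (rule ccontr)
  assume nt: "\<not> two_connected V E"
  have "\<exists>W. W \<subseteq> Pow E \<and> (\<forall>A B. A \<in> W \<longrightarrow> B \<in> W \<longrightarrow> sdiff A B \<in> W) \<and>
     cycle_matroid_circuits V E \<subseteq> circs W \<and> (\<exists>D\<in>circs W. D \<notin> cycle_matroid_circuits V E)"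
  proof (cases "card V < 3")
    case True
    then show ?thesis by (rule small_case[OF assms(1,2)])
  next
    case c3: False
    show ?thesis
    proof (cases "graph_connected V E")
      case False
      have "V \<noteq> {}" using assms(1) unfolding simple_graph_def by simp
      then obtain u v where uv: "u \<in> V" "v \<in> V" "(u, v) \<notin> (adj V E)\<^sup>*"
        using False unfolding gc_adj by blast
      show ?thesis by (rule disc_case[OF assms(1,2) uv])
    next
      case True
      then obtain x where x: "x \<in> V" "\<not> graph_connected (V - {x}) {e\<in>E. x \<notin> e}"
        using nt c3 unfolding two_connected_def by auto
      have fV: "finite V" using assms(1) unfolding simple_graph_def by simp
      have "card (V - {x}) = card V - 1" using x(1) fV by simp
      then have "card (V - {x}) \<noteq> 0" using c3 by linarith
      then have "V - {x} \<noteq> {}" by (metis card.empty)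
      then obtain u v where uv: "u \<in> V - {x}" "v \<in> V - {x}"
          "(u, v) \<notin> (adj (V - {x}) {e\<in>E. x \<notin> e})\<^sup>*"
        using x(2) unfolding gc_adj by blast
      show ?thesis by (rule cut_case[OF assms(1,2) True x(1) uv])
    qed
  qed
  then obtain W where W: "W \<subseteq> Pow E" "\<forall>A B. A \<in> W \<longrightarrow> B \<in> W \<longrightarrow> sdiff A B \<in> W"
    "cycle_matroid_circuits V E \<subseteq> circs W" "\<exists>D\<in>circs W. D \<notin> cycle_matroid_circuits V E"
    by blast
  obtain D where D: "D \<in> circs W" "D \<notin> cycle_matroid_circuits V E" using W(4) by blast
  have "binary_matroid E (circs W) \<and> nontrivial_circuit_injection V E id E (circs W)"
    by (rule key[OF assms(1,2) W(1) _ W(3) D]) (use W(2) in blast)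
  then show False using assms(3) by blast
qed

end
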